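(* Let $q=2^t$. For any choice of the set $Y$, every $\chi_\ell$ with $\ell\in L\setminus\{\ell_0\}$, as well as the constant function $\mathbf{1}$ on $P$, lies in the $\mathbb{F}_2$-span of $\{\chi_\ell:\ell\in X_0\cup Y\cup L_1\}$.
   Context: Let $q$ be a prime power and $V$ a $4$-dimensional vector space over $\mathbb{F}_q$ with a nonsingular alternating bilinear form and symplectic basis $e_0,e_1,e_2,e_3$ with $(e_0,e_3)=(e_1,e_2)=1$. $P$ is the set of $1$-dimensional subspaces of $V$ (points), $L$ the set of totally isotropic $2$-dimensional subspaces (lines). $p_0=\langle e_0\rangle$, $\ell_0=\langle e_0,e_1\rangle$, $L_1$ is the set of lines sharing no point with $\ell_0$. $\mathbb{F}_2[P]$ is the space of functions $P\to\mathbb{F}_2$, $\chi_\ell$ the characteristic function of the point set of a line $\ell$. $X$ is the set of the $q+1$ lines through $p_0$, and $X_0=X\setminus\{\ell_0\}$. $Y$ is any set of $q$ lines, each different from $\ell_0$ and meeting $\ell_0$ in a point other than $p_0$, such that distinct lines of $Y$ meet $\ell_0$ in distinct points (so $Y$ contains exactly one line through each point of $\ell_0\setminus\{p_0\}$). *)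

theory Defs
  imports Main "HOL-Library.Z2"
begin

text \<open>The symplectic space V = F_q^4, vectors as functions nat => 'a supported on {0..3}.\<close>

definition Vec :: "(nat \<Rightarrow> 'a::field) set" where
  "Vec = {v. \<forall>i\<ge>4. v i = 0}"

definition symp :: "(nat \<Rightarrow> 'a::field) \<Rightarrow> (nat \<Rightarrow> 'a) \<Rightarrow> 'a" where
  "symp x y = x 0 * y 3 - x 3 * y 0 + x 1 * y 2 - x 2 * y 1"

definition ebas :: "nat \<Rightarrow> nat \<Rightarrow> 'a::field" where
  "ebas i = (\<lambda>j. if j = i then 1 else 0)"

definition span1 :: "(nat \<Rightarrow> 'a::field) \<Rightarrow> (nat \<Rightarrow> 'a) set" where
  "span1 v = {(\<lambda>i. c * v i) | c. True}"

definition span2 :: "(nat \<Rightarrow> 'a::field) \<Rightarrow> (nat \<Rightarrow> 'a) \<Rightarrow> (nat \<Rightarrow> 'a) set" where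
  "span2 u w = {(\<lambda>i. a * u i + b * w i) | a b. True}"

definition lin_indep2 :: "(nat \<Rightarrow> 'a::field) \<Rightarrow> (nat \<Rightarrow> 'a) \<Rightarrow> bool" where
  "lin_indep2 u w \<longleftrightarrow> (\<forall>a b. (\<forall>i. a * u i + b * w i = 0) \<longrightarrow> a = 0 \<and> b = 0)"

definition Pts :: "(nat \<Rightarrow> 'a::field) set set" where
  "Pts = {span1 v | v. v \<in> Vec \<and> (\<exists>i. v i \<noteq> 0)}"

definition Lns :: "(nat \<Rightarrow> 'a::field) set set" where
  "Lns = {span2 u w | u w. u \<in> Vec \<and> w \<in> Vec \<and> lin_indep2 u w \<and>
     symp u u = 0 \<and> symp u w = 0 \<and> symp w w = 0}"

definition p0 :: "(nat \<Rightarrow> 'a::field) set" where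
  "p0 = span1 (ebas 0)"

definition l0 :: "(nat \<Rightarrow> 'a::field) set" where
  "l0 = span2 (ebas 0) (ebas 1)"

definition L1 :: "(nat \<Rightarrow> 'a::field) set set" where
  "L1 = {l \<in> Lns. \<not> (\<exists>p\<in>Pts. p \<subseteq> l \<and> p \<subseteq> l0)}"

definition Xl :: "(nat \<Rightarrow> 'a::field) set set" where
  "Xl = {l \<in> Lns. p0 \<subseteq> l}"

definition X0 :: "(nat \<Rightarrow> 'a::field) set set" where
  "X0 = Xl - {l0}"

definition is_Y :: "(nat \<Rightarrow> 'a::{field,finite}) set set \<Rightarrow> bool" where
  "is_Y Y \<longleftrightarrow> Y \<subseteq> Lns \<and> card Y = card (UNIV :: 'a set) \<and>
     (\<forall>l\<in>Y. l \<noteq> l0 \<and> l \<inter> l0 \<in> Pts \<and> l \<inter> l0 \<noteq> p0) \<and>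
     inj_on (\<lambda>l. l \<inter> l0) Y"

definition chi :: "(nat \<Rightarrow> 'a::field) set \<Rightarrow> (nat \<Rightarrow> 'a) set \<Rightarrow> bit" where
  "chi l p = (if p \<subseteq> l then 1 else 0)"

definition in_F2_span :: "((nat \<Rightarrow> 'a::field) set \<Rightarrow> bit) \<Rightarrow> (nat \<Rightarrow> 'a) set set \<Rightarrow> bool" where
  "in_F2_span f S \<longleftrightarrow> (\<exists>c :: (nat \<Rightarrow> 'a) set \<Rightarrow> bit.
      \<forall>p\<in>Pts. f p = (\<Sum>l\<in>S. c l * chi l p))"

end

theory Submission
  imports Defs "HOL-Number_Theory.Number_Theory"
begin

lemma char2:
  assumes "card (UNIV :: 'a::{field,finite} set) = 2 ^ t"
  shows "(2::'a) = 0"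
proof -
  have pos: "CHAR('a) > 0" by (rule finite_imp_CHAR_pos) simp
  have pr: "prime CHAR('a)" by (rule prime_CHAR_semidom[OF pos])
  have "CHAR('a) dvd 2 ^ t" using CHAR_dvd_CARD[where 'a='a] assms by simp
  hence "CHAR('a) dvd 2" using pr prime_dvd_power by blast
  hence "CHAR('a) = 2" using pr primes_dvd_imp_eq two_is_prime_nat by blast
  moreover have "of_nat CHAR('a) = (0::'a)" by (rule of_nat_CHAR)
  ultimately have "of_nat 2 = (0::'a)" by simp
  thus ?thesis by simp
qed

lemma card_even:
  assumes "card (UNIV :: 'a::{field,finite} set) = 2 ^ t"
  shows "of_nat (card (UNIV :: 'a set)) = (0::bit)"
proof -
  have "card {0::'a, 1} \<le> card (UNIV :: 'a set)" by (rule card_mono) auto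
  hence two: "2 \<le> card (UNIV :: 'a set)" by simp
  have "t \<noteq> 0"
  proof
    assume "t = 0" with assms two show False by simp
  qed
  then obtain k where "t = Suc k" by (cases t) auto
  hence "card (UNIV :: 'a set) = 2 * 2^k" using assms by simp
  thus ?thesis by simp
qed

lemma finite_Vec: "finite (Vec :: (nat \<Rightarrow> 'a::{field,finite}) set)"
proof -
  have "Vec = {f :: nat \<Rightarrow> 'a. \<forall>x. (x \<in> {..<4} \<longrightarrow> f x \<in> UNIV) \<and> (x \<notin> {..<4} \<longrightarrow> f x = 0)}"
    unfolding Vec_def by auto
  thus ?thesis using finite_set_of_finite_funs[of "{..<4::nat}" "UNIV :: 'a set" 0] by simp
qed

lemma finite_Lns: "finite (Lns :: (nat \<Rightarrow> 'a::{field,finite}) set set)"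
proof -
  have "Lns \<subseteq> (\<lambda>(u,w). span2 u w) ` ((Vec :: (nat \<Rightarrow> 'a) set) \<times> Vec)"
    unfolding Lns_def by auto
  thus ?thesis using finite_Vec by (meson finite_SigmaI finite_imageI finite_subset)
qed

lemma mem_span2: "x \<in> span2 u w \<longleftrightarrow> (\<exists>a b. \<forall>i. x i = a * u i + b * w i)"
  unfolding span2_def by (auto simp: fun_eq_iff)

lemma span1_sub: "span1 v \<subseteq> span2 u w \<longleftrightarrow> v \<in> span2 u w"
proof
  assume "span1 v \<subseteq> span2 u w"
  moreover have "v \<in> span1 v" unfolding span1_def by (rule CollectI, rule exI[of _ 1]) auto
  ultimately show "v \<in> span2 u w" by blast
next
  assume "v \<in> span2 u w"
  then obtain a b where ab: "\<forall>i. v i = a * u i + b * w i" by (auto simp: mem_span2)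
  show "span1 v \<subseteq> span2 u w"
  proof
    fix x assume "x \<in> span1 v"
    then obtain c where "x = (\<lambda>i. c * v i)" unfolding span1_def by auto
    hence "\<forall>i. x i = (c*a) * u i + (c*b) * w i" using ab by (simp add: algebra_simps)
    thus "x \<in> span2 u w" by (auto simp: mem_span2)
  qed
qed

lemma chi_span: "chi (span2 u w) (span1 v) = (if v \<in> span2 u w then 1 else 0)"
  unfolding chi_def by (simp add: span1_sub)

definition vec4 :: "'a::field \<Rightarrow> 'a \<Rightarrow> 'a \<Rightarrow> 'a \<Rightarrow> nat \<Rightarrow> 'a" where
  "vec4 a b c d = (\<lambda>i. if i = 0 then a else if i = 1 then b else if i = 2 then c else if i = 3 then d else 0)"

lemma vec4_simps[simp]: "vec4 a b c d 0 = a" "vec4 a b c d 1 = b" "vec4 a b c d 2 = c" "vec4 a b c d 3 = d"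
  "vec4 a b c d (Suc 0) = b"
  "i \<ge> 4 \<Longrightarrow> vec4 a b c d i = 0"
  by (auto simp: vec4_def)

lemma vec4_Vec[simp]: "vec4 a b c d \<in> Vec" by (simp add: Vec_def)

lemma Vec_cases: "v \<in> Vec \<Longrightarrow> (\<And>i. i < 4 \<Longrightarrow> P i) \<Longrightarrow> v i = 0 \<or> P i"
  unfolding Vec_def by (cases "i < 4") auto

lemma Vec_eq: assumes "v \<in> Vec" "u \<in> Vec" "v 0 = u 0" "v 1 = u 1" "v 2 = u 2" "v 3 = u 3"
  shows "v = u"
proof
  fix i show "v i = u i"
  proof (cases "i < 4")
    case True
    hence "i = 0 \<or> i = 1 \<or> i = 2 \<or> i = 3" by auto
    thus ?thesis using assms by auto
  next
    case False thus ?thesis using assms unfolding Vec_def by auto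
  qed
qed

lemma Vec_span_mem:
  assumes "v \<in> Vec" "u \<in> Vec" "w \<in> Vec"
  shows "v \<in> span2 u w \<longleftrightarrow> (\<exists>a b. \<forall>i<4. v i = a * u i + b * w i)"
proof -
  have "(\<forall>i<4. v i = a * u i + b * w i) \<longleftrightarrow> (\<forall>i. v i = a * u i + b * w i)" for a b
  proof
    assume h: "\<forall>i<4. v i = a * u i + b * w i"
    show "\<forall>i. v i = a * u i + b * w i"
    proof
      fix i show "v i = a * u i + b * w i"
      proof (cases "i < 4")
        case True thus ?thesis using h by simp
      next
        case False
        hence "v i = 0" "u i = 0" "w i = 0" using assms unfolding Vec_def by auto
        thus ?thesis by simp
      qed
    qed
  qed simp
  thus ?thesis by (simp add: mem_span2)
qed

lemma all4: "(\<forall>i<4::nat. P i) \<longleftrightarrow> P 0 \<and> P 1 \<and> P 2 \<and> P 3"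
  by (auto simp: less_Suc_eq numeral_eq_Suc)


definition Lf :: "'a::field \<Rightarrow> 'a \<Rightarrow> 'a \<Rightarrow> (nat \<Rightarrow> 'a) set" where
  "Lf a b c = span2 (vec4 a b 1 0) (vec4 c a 0 1)"
definition Xf :: "'a::field \<Rightarrow> (nat \<Rightarrow> 'a) set" where
  "Xf b = span2 (vec4 1 0 0 0) (vec4 0 b 1 0)"
definition Mf :: "'a::field \<Rightarrow> 'a \<Rightarrow> (nat \<Rightarrow> 'a) set" where
  "Mf a b = span2 (vec4 a 1 0 0) (vec4 b 0 a 1)"

lemma memL: "v \<in> Vec \<Longrightarrow> v \<in> Lf a b c \<longleftrightarrow> (v 0 = v 2 * a + v 3 * c \<and> v 1 = v 2 * b + v 3 * a)"
  unfolding Lf_def by (simp add: Vec_span_mem all4)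

lemma memX: "v \<in> Vec \<Longrightarrow> v \<in> Xf b \<longleftrightarrow> (v 1 = v 2 * b \<and> v 3 = 0)"
  unfolding Xf_def by (simp add: Vec_span_mem all4)

lemma memM: "v \<in> Vec \<Longrightarrow> v \<in> Mf a b \<longleftrightarrow> (v 0 = v 1 * a + v 3 * b \<and> v 2 = v 3 * a)"
  unfolding Mf_def by (simp add: Vec_span_mem all4)

lemma ebas0: "ebas 0 = vec4 1 0 0 0" by (auto simp: ebas_def vec4_def fun_eq_iff)
lemma ebas1: "ebas 1 = vec4 0 1 0 0" by (auto simp: ebas_def vec4_def fun_eq_iff)

lemma memL0: "v \<in> Vec \<Longrightarrow> v \<in> l0 \<longleftrightarrow> (v 2 = 0 \<and> v 3 = 0)"
  unfolding l0_def ebas0 ebas1 by (simp add: Vec_span_mem all4)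

lemma Pts_E:
  assumes "p \<in> Pts"
  obtains v where "p = span1 v" "v \<in> Vec" "v 0 \<noteq> 0 \<or> v 1 \<noteq> 0 \<or> v 2 \<noteq> 0 \<or> v 3 \<noteq> 0"
proof -
  obtain v i where v: "p = span1 v" "v \<in> Vec" "v i \<noteq> 0" using assms unfolding Pts_def by auto
  have "i < 4"
  proof (rule ccontr)
    assume "\<not> i < 4"
    hence "v i = 0" using v(2) unfolding Vec_def by simp
    thus False using v(3) by simp
  qed
  hence "i = 0 \<or> i = 1 \<or> i = 2 \<or> i = 3" by auto
  thus ?thesis using v that by auto
qed

lemma Lf_Lns: "Lf a b c \<in> Lns"
proof -
  have "lin_indep2 (vec4 a b 1 0) (vec4 c a 0 1)"
    unfolding lin_indep2_def
  proof (intro allI impI)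
    fix x y :: 'a assume h: "\<forall>i. x * vec4 a b 1 0 i + y * vec4 c a 0 1 i = 0"
    from h[rule_format, of 2] h[rule_format, of 3] show "x = 0 \<and> y = 0" by simp
  qed
  hence "Lf a b c = span2 (vec4 a b 1 0) (vec4 c a 0 1) \<and> vec4 a b 1 0 \<in> Vec \<and> vec4 c a 0 1 \<in> Vec \<and> lin_indep2 (vec4 a b 1 0) (vec4 c a 0 1) \<and>
     symp (vec4 a b 1 0) (vec4 a b 1 0) = 0 \<and> symp (vec4 a b 1 0) (vec4 c a 0 1) = 0 \<and> symp (vec4 c a 0 1) (vec4 c a 0 1) = 0"
    unfolding Lf_def by (simp add: symp_def)
  thus ?thesis unfolding Lns_def by blast
qed

lemma Xf_Lns: "Xf b \<in> Lns"
proof -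
  have "lin_indep2 (vec4 1 0 0 0) (vec4 0 b 1 0)"
    unfolding lin_indep2_def
  proof (intro allI impI)
    fix x y :: 'a assume h: "\<forall>i. x * vec4 1 0 0 0 i + y * vec4 0 b 1 0 i = 0"
    from h[rule_format, of 0] h[rule_format, of 2] show "x = 0 \<and> y = 0" by simp
  qed
  hence "Xf b = span2 (vec4 1 0 0 0) (vec4 0 b 1 0) \<and> vec4 1 0 0 0 \<in> Vec \<and> vec4 0 b 1 0 \<in> Vec \<and> lin_indep2 (vec4 1 0 0 0) (vec4 0 b 1 0) \<and>
     symp (vec4 1 0 0 0) (vec4 1 0 0 0) = 0 \<and> symp (vec4 1 0 0 0) (vec4 0 b 1 0) = 0 \<and> symp (vec4 0 b 1 0) (vec4 0 b 1 0) = 0"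
    unfolding Xf_def by (simp add: symp_def)
  thus ?thesis unfolding Lns_def by blast
qed

lemma Mf_Lns: assumes c2: "(2::'a::field) = 0" shows "Mf (a::'a) b \<in> Lns"
proof -
  have "lin_indep2 (vec4 a 1 0 0) (vec4 b 0 a 1)"
    unfolding lin_indep2_def
  proof (intro allI impI)
    fix x y :: 'a assume h: "\<forall>i. x * vec4 a 1 0 0 i + y * vec4 b 0 a 1 i = 0"
    from h[rule_format, of 1] h[rule_format, of 3] show "x = 0 \<and> y = 0" by simp
  qed
  moreover have "a + a = 0"
  proof -
    have "a + a = 2 * a" by (rule mult_2[symmetric])
    thus ?thesis using c2 by simp
  qed
  ultimately have "Mf a b = span2 (vec4 a 1 0 0) (vec4 b 0 a 1) \<and> vec4 a 1 0 0 \<in> Vec \<and> vec4 b 0 a 1 \<in> Vec \<and> lin_indep2 (vec4 a 1 0 0) (vec4 b 0 a 1) \<and>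
     symp (vec4 a 1 0 0) (vec4 a 1 0 0) = 0 \<and> symp (vec4 a 1 0 0) (vec4 b 0 a 1) = 0 \<and> symp (vec4 b 0 a 1) (vec4 b 0 a 1) = 0"
    unfolding Mf_def by (simp add: symp_def)
  thus ?thesis unfolding Lns_def by blast
qed

lemma span_zero: "in_F2_span (\<lambda>p. 0) S"
  unfolding in_F2_span_def by (rule exI[of _ "\<lambda>l. 0"]) simp

lemma span_single: assumes "finite S" "l \<in> S" shows "in_F2_span (chi l) S"
  unfolding in_F2_span_def
proof (rule exI[of _ "\<lambda>l'. if l' = l then 1 else 0"], intro ballI)
  fix p
  have "(\<Sum>l'\<in>S. (if l' = l then 1 else 0) * chi l' p) = (\<Sum>l'\<in>S. if l' = l then chi l' p else 0)"
    by (rule sum.cong) auto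
  also have "\<dots> = chi l p" using assms by simp
  finally show "chi l p = (\<Sum>l'\<in>S. (if l' = l then 1 else 0) * chi l' p)" by simp
qed

lemma span_add: fixes f g :: "(nat \<Rightarrow> 'a::field) set \<Rightarrow> bit"
  assumes "in_F2_span f S" "in_F2_span g S" shows "in_F2_span (\<lambda>p. f p + g p) S"
proof -
  obtain c1 where c1: "\<forall>p\<in>(Pts::(nat \<Rightarrow> 'a) set set). f p = (\<Sum>l\<in>S. c1 l * chi l p)" using assms(1) unfolding in_F2_span_def by blast
  obtain c2 where c2: "\<forall>p\<in>(Pts::(nat \<Rightarrow> 'a) set set). g p = (\<Sum>l\<in>S. c2 l * chi l p)" using assms(2) unfolding in_F2_span_def by blast
  show ?thesis unfolding in_F2_span_def
  proof (rule exI[of _ "\<lambda>l. c1 l + c2 l"], intro ballI)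
    fix p :: "(nat \<Rightarrow> 'a) set" assume "p \<in> Pts"
    hence "f p + g p = (\<Sum>l\<in>S. c1 l * chi l p) + (\<Sum>l\<in>S. c2 l * chi l p)" using c1 c2 by simp
    also have "\<dots> = (\<Sum>l\<in>S. (c1 l + c2 l) * chi l p)" by (simp only: distrib_right sum.distrib)
    finally show "f p + g p = (\<Sum>l\<in>S. (c1 l + c2 l) * chi l p)" .
  qed
qed

lemma span_sum: assumes "finite I" "\<And>i. i \<in> I \<Longrightarrow> in_F2_span (f i) S"
  shows "in_F2_span (\<lambda>p. \<Sum>i\<in>I. f i p) S"
  using assms
proof (induction I rule: finite_induct)
  case empty thus ?case by (simp add: span_zero)
next
  case (insert x F)
  have "in_F2_span (\<lambda>p. f x p + (\<Sum>i\<in>F. f i p)) S"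
    by (rule span_add) (use insert in auto)
  thus ?case using insert by simp
qed

lemma span_cong: assumes "in_F2_span g S" "\<And>p. p \<in> Pts \<Longrightarrow> f p = g p" shows "in_F2_span f S"
  using assms unfolding in_F2_span_def by simp


lemma bit_add_self[simp]: "(x::bit) + x = 0"
proof -
  have "x + x = 2 * x" by (rule mult_2[symmetric])
  thus ?thesis by simp
qed

lemma sum_unique_bit:
  assumes "\<And>x. P x \<longleftrightarrow> x = k"
  shows "(\<Sum>x\<in>(UNIV::'a::finite set). if P x then (1::bit) else 0) = 1"
  using assms by simp

lemma sum_none_bit:
  assumes "\<And>x. \<not> P x"
  shows "(\<Sum>x\<in>A. if P x then (1::bit) else 0) = 0"
  using assms by simp

lemma sum_const_bit:
  assumes "of_nat (card (UNIV :: 'a::finite set)) = (0::bit)"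
  shows "(\<Sum>x\<in>(UNIV::'a set). (c::bit)) = 0"
  using assms by simp

lemma neg_self: assumes c2: "(2::'a::field) = 0" shows "- (x::'a) = x"
proof -
  have "x + x = 2 * x" by (rule mult_2[symmetric])
  hence "x + x = 0" using c2 by simp
  thus ?thesis by (rule minus_unique)
qed

lemma eq_iff_add: assumes c2: "(2::'a::field) = 0" shows "(x::'a) = y \<longleftrightarrow> x + y = 0"
proof -
  have ny: "- y = y" by (rule neg_self[OF c2])
  have h: "(x = - y) = (x + y = 0)" by (rule eq_neg_iff_add_eq_0)
  show ?thesis using h by (simp only: ny)
qed

lemma key_diff:
  fixes v0 v1 v2 v3 \<alpha> \<beta> \<beta>' :: "'a::{field,finite}"
  assumes c2: "(2::'a) = 0" and ne: "\<beta> \<noteq> \<beta>'"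
  shows "(if v0 = v1*\<alpha> + v3*\<beta> \<and> v2 = v3*\<alpha> then 1 else 0 :: bit)
       = (if v0 = v1*\<alpha> + v3*\<beta>' \<and> v2 = v3*\<alpha> then 1 else 0)
       + (\<Sum>z\<in>UNIV. if v0 = v2 * ((\<beta>+\<beta>')*(z + \<alpha>*z^2)) + v3 * (\<beta> + \<alpha>^2*(\<beta>+\<beta>')*z^2)
              \<and> v1 = v2 * ((\<beta>+\<beta>')*z^2) + v3 * ((\<beta>+\<beta>')*(z + \<alpha>*z^2)) then 1 else 0)
       + (\<Sum>z\<in>UNIV. if v0 = v2 * ((\<beta>+\<beta>')*(z + \<alpha>*z^2)) + v3 * (\<beta>' + \<alpha>^2*(\<beta>+\<beta>')*z^2)
              \<and> v1 = v2 * ((\<beta>+\<beta>')*z^2) + v3 * ((\<beta>+\<beta>')*(z + \<alpha>*z^2)) then 1 else 0)"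
    (is "?L = ?R1 + sum (\<lambda>z. if ?c \<beta> z then 1 else 0) UNIV + sum (\<lambda>z. if ?c \<beta>' z then 1 else 0) UNIV")
proof -
  define \<delta> where "\<delta> = \<beta> + \<beta>'"
  define u where "u = v2 + \<alpha> * v3"
  have dne: "\<delta> \<noteq> 0" using ne eq_iff_add[OF c2, of \<beta> \<beta>'] unfolding \<delta>_def by simp
  have two0: "\<And>x::'a. 2 * x = 0" using c2 by simp
  have cnd: "?c k z \<longleftrightarrow> (v1 = \<delta>*(u*z^2 + v3*z) \<and> v0 + \<alpha>*v1 = \<delta>*u*z + v3*k)" for k z
  proof -
    define E0 where "E0 = v2 * (\<delta>*(z + \<alpha>*z^2)) + v3 * (k + \<alpha>^2*\<delta>*z^2)"
    define E1 where "E1 = v2 * (\<delta>*z^2) + v3 * (\<delta>*(z + \<alpha>*z^2))"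
    have e1: "E1 = \<delta>*(u*z^2 + v3*z)" unfolding E1_def u_def by (simp add: algebra_simps)
    have e0: "E0 + \<alpha>*E1 = \<delta>*u*z + v3*k + 2 * (\<alpha>*v2*\<delta>*z^2 + \<alpha>^2*v3*\<delta>*z^2)"
      unfolding E0_def E1_def u_def by (simp add: algebra_simps power2_eq_square mult_2)
    hence e0': "E0 + \<alpha>*E1 = \<delta>*u*z + v3*k" using two0 by simp
    have "?c k z \<longleftrightarrow> v0 = E0 \<and> v1 = E1" unfolding E0_def E1_def \<delta>_def by simp
    also have "\<dots> \<longleftrightarrow> v1 = E1 \<and> v0 + \<alpha>*v1 = E0 + \<alpha>*E1" by auto
    finally show ?thesis using e1 e0' by auto
  qed
  show ?thesis
  proof (cases "u = 0")
    case False
    define k0 where "k0 = v3 / u"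
    have uk: "u * k0 = v3" unfolding k0_def using False by simp
    have sq: "u*(z+k0)^2 + v3*(z+k0) = u*z^2 + v3*z" for z
    proof -
      have "u*(z+k0)^2 + v3*(z+k0) = u*z^2 + v3*z + 2*(u*z*k0) + (u*k0)*k0 + v3*k0"
        by (simp add: algebra_simps power2_eq_square mult_2)
      also have "\<dots> = u*z^2 + v3*z + 2*(u*z*k0 + v3*k0)" unfolding uk by (simp add: algebra_simps mult_2)
      finally show ?thesis using two0 by simp
    qed
    have lin: "\<delta>*u*(z+k0) + v3*\<beta>' = \<delta>*u*z + v3*\<beta>" for z
    proof -
      have a: "\<delta>*u*(z+k0) = \<delta>*u*z + \<delta>*(u*k0)" by (simp add: algebra_simps)
      have uk2: "k0 * u = v3" using uk by (simp add: mult.commute)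
      have "\<delta>*u*(z+k0) + v3*\<beta>' = \<delta>*u*z + v3*\<beta> + 2*(v3*\<beta>')" unfolding a uk \<delta>_def by (simp add: algebra_simps mult_2 uk2)
      thus ?thesis using two0 by simp
    qed
    have shift: "?c \<beta>' (z + k0) \<longleftrightarrow> ?c \<beta> z" for z
      unfolding cnd sq lin ..
    have "sum (\<lambda>z. if ?c \<beta>' z then (1::bit) else 0) UNIV
        = sum (\<lambda>z. if ?c \<beta>' z then (1::bit) else 0) ((\<lambda>z. z + k0) ` UNIV)"
    proof -
      have "(\<lambda>z. z + k0) ` UNIV = (UNIV :: 'a set)"
        by (rule surjI[of "\<lambda>z. z + k0" "\<lambda>x. x - k0"]) simp
      thus ?thesis by simp
    qed
    also have "\<dots> = sum (\<lambda>z. if ?c \<beta>' (z + k0) then (1::bit) else 0) UNIV"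
      by (subst sum.reindex) (auto simp: inj_on_def)
    also have "\<dots> = sum (\<lambda>z. if ?c \<beta> z then (1::bit) else 0) UNIV"
      using shift by simp
    finally have S: "sum (\<lambda>z. if ?c \<beta>' z then (1::bit) else 0) UNIV = sum (\<lambda>z. if ?c \<beta> z then (1::bit) else 0) UNIV" .
    have "v2 \<noteq> v3 * \<alpha>"
    proof
      assume "v2 = v3 * \<alpha>"
      hence "u = 2 * (v3 * \<alpha>)" unfolding u_def by (simp add: algebra_simps)
      thus False using False two0 by simp
    qed
    thus ?thesis using S by simp
  next
    case True
    note u0 = True
    hence v2: "v2 = v3 * \<alpha>" unfolding u_def using eq_iff_add[OF c2, of v2 "\<alpha>*v3"] by (simp add: mult.commute)
    have m: "(v0 = v1*\<alpha> + v3*b) \<longleftrightarrow> v0 + \<alpha>*v1 = v3*b" for b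
    proof -
      have "(v0 = v1*\<alpha> + v3*b) \<longleftrightarrow> v0 + \<alpha>*v1 = v1*\<alpha> + v3*b + \<alpha>*v1" by auto
      also have "v1*\<alpha> + v3*b + \<alpha>*v1 = v3*b + 2*(\<alpha>*v1)" by (simp add: algebra_simps mult_2)
      finally show ?thesis using two0 by simp
    qed
    show ?thesis
    proof (cases "v3 = 0")
      case False
      have c': "?c k z \<longleftrightarrow> (z = v1/(\<delta>*v3) \<and> v0 + \<alpha>*v1 = v3*k)" for k z
        unfolding cnd u0 using False dne by (auto simp: field_simps)
      have s: "sum (\<lambda>z. if ?c k z then (1::bit) else 0) UNIV = (if v0 + \<alpha>*v1 = v3*k then 1 else 0)" for k
        unfolding c' by (cases "v0 + \<alpha>*v1 = v3*k") simp_all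
      show ?thesis unfolding s using v2 m by simp
    next
      case True
      hence c': "?c k z \<longleftrightarrow> (v1 = 0 \<and> v0 = 0)" for k z
        unfolding cnd u0 using True by auto
      have e: "(if v0 = v1*\<alpha> + v3*\<beta> \<and> v2 = v3*\<alpha> then 1 else (0::bit)) = (if v0 = v1*\<alpha> + v3*\<beta>' \<and> v2 = v3*\<alpha> then 1 else 0)"
        using True by simp
      show ?thesis unfolding c' e by (simp only: add.assoc bit_add_self add_0_right)
    qed
  qed
qed


lemma sum_cond_bit:
  assumes "\<And>x. P x \<longleftrightarrow> x = k \<and> Q"
  shows "(\<Sum>x\<in>(UNIV::'a::finite set). if P x then (1::bit) else 0) = (if Q then 1 else 0)"
  using assms by (cases Q) auto

lemma key_one:
  fixes v0 v1 v2 v3 :: "'a::{field,finite}"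
  assumes qe: "of_nat (card (UNIV::'a set)) = (0::bit)"
  shows "(1::bit) = (\<Sum>a\<in>UNIV. \<Sum>c\<in>UNIV. if v0 = v2*a + v3*c \<and> v1 = v2*0 + v3*a then 1 else 0)
    + (\<Sum>a\<in>UNIV. if v0 = v2*a + v3*0 \<and> v1 = v2*0 + v3*a then 1 else 0)
    + (\<Sum>b\<in>UNIV. if v1 = v2*b \<and> v3 = 0 then 1 else 0)
    + (if v1 = v2*0 \<and> v3 = 0 then 1 else 0)
    + (\<Sum>s\<in>UNIV. if v0 = v1*s + v3*0 \<and> v2 = v3*s then 1 else 0)"
proof -
  have C: "\<And>c::bit. (\<Sum>x\<in>(UNIV::'a set). c) = 0" using qe by simp
  consider (a) "v3 \<noteq> 0" | (b) "v3 = 0" "v2 \<noteq> 0" | (c) "v3 = 0" "v2 = 0" by blast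
  then show ?thesis
  proof cases
    case a
    have inner: "(\<Sum>c\<in>UNIV. if v0 = v2*x + v3*c \<and> v1 = v2*0 + v3*x then 1 else 0) = (if v1 = v3*x then 1 else (0::bit))" for x
      by (rule sum_cond_bit[where k = "(v0 - v2*x)/v3"]) (use a in \<open>auto simp: field_simps\<close>)
    have T1: "(\<Sum>x\<in>UNIV. if v1 = v3*x then 1 else (0::bit)) = 1"
      by (rule sum_unique_bit[where k = "v1/v3"]) (use a in \<open>auto simp: field_simps\<close>)
    have T2: "(\<Sum>x\<in>UNIV. if v0 = v2*x + v3*0 \<and> v1 = v2*0 + v3*x then 1 else 0) = (if v0 = v2*(v1/v3) then 1 else (0::bit))"
      by (rule sum_cond_bit[where k = "v1/v3"]) (use a in \<open>auto simp: field_simps\<close>)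
    have T5: "(\<Sum>x\<in>UNIV. if v0 = v1*x + v3*0 \<and> v2 = v3*x then 1 else 0) = (if v0 = v2*(v1/v3) then 1 else (0::bit))"
      by (rule sum_cond_bit[where k = "v2/v3"]) (use a in \<open>auto simp: field_simps\<close>)
    show ?thesis unfolding inner T1 T2 T5 using a by simp
  next
    case b
    have T1: "(\<Sum>x\<in>UNIV. \<Sum>c\<in>UNIV. if v0 = v2*x + v3*c \<and> v1 = v2*0 + v3*x then 1 else (0::bit)) = 0"
      by (simp only: b(1) mult_zero_left mult_zero_right add_0_right add_0_left C sum.neutral_const)
    have T2: "(\<Sum>x\<in>UNIV. if v0 = v2*x + v3*0 \<and> v1 = v2*0 + v3*x then 1 else 0) = (if v1 = 0 then 1 else (0::bit))"
      by (rule sum_cond_bit[where k = "v0/v2"]) (use b in \<open>auto simp: field_simps\<close>)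
    have T3: "(\<Sum>x\<in>UNIV. if v1 = v2*x \<and> v3 = 0 then 1 else (0::bit)) = 1"
      by (rule sum_unique_bit[where k = "v1/v2"]) (use b in \<open>auto simp: field_simps\<close>)
    show ?thesis unfolding T1 T2 T3 using b by simp
  next
    case c
    have T1: "(\<Sum>x\<in>UNIV. \<Sum>c\<in>UNIV. if v0 = v2*x + v3*c \<and> v1 = v2*0 + v3*x then 1 else (0::bit)) = 0"
      using c C by simp
    have T2: "(\<Sum>x\<in>UNIV. if v0 = v2*x + v3*0 \<and> v1 = v2*0 + v3*x then 1 else (0::bit)) = 0"
      using c C by simp
    have T3: "(\<Sum>x\<in>UNIV. if v1 = v2*x \<and> v3 = 0 then 1 else (0::bit)) = 0"
      using c C by simp
    show ?thesis
    proof (cases "v1 = 0")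
      case True
      have T5: "(\<Sum>x\<in>UNIV. if v0 = v1*x + v3*0 \<and> v2 = v3*x then 1 else (0::bit)) = 0"
        using c C True by simp
      show ?thesis unfolding T1 T2 T3 T5 using c True by simp
    next
      case False
      have T5: "(\<Sum>x\<in>UNIV. if v0 = v1*x + v3*0 \<and> v2 = v3*x then 1 else (0::bit)) = 1"
        by (rule sum_unique_bit[where k = "v0/v1"]) (use c False in \<open>auto simp: field_simps\<close>)
      show ?thesis unfolding T1 T2 T3 T5 using c False by simp
    qed
  qed
qed

lemma chi_Lf: "v \<in> Vec \<Longrightarrow> chi (Lf a b c) (span1 v) = (if v 0 = v 2 * a + v 3 * c \<and> v 1 = v 2 * b + v 3 * a then 1 else 0)"
  using memL[of v a b c] unfolding Lf_def by (simp add: chi_span)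

lemma chi_Xf: "v \<in> Vec \<Longrightarrow> chi (Xf b) (span1 v) = (if v 1 = v 2 * b \<and> v 3 = 0 then 1 else 0)"
  using memX[of v b] unfolding Xf_def by (simp add: chi_span)

lemma chi_Mf: "v \<in> Vec \<Longrightarrow> chi (Mf a b) (span1 v) = (if v 0 = v 1 * a + v 3 * b \<and> v 2 = v 3 * a then 1 else 0)"
  using memM[of v a b] unfolding Mf_def by (simp add: chi_span)

lemma in_span1: "v \<in> span1 v"
  unfolding span1_def by (rule CollectI, rule exI[of _ 1]) auto

lemma span1_scale: assumes "(c::'a::field) \<noteq> 0" shows "span1 (\<lambda>i. c * v i) = span1 v"
proof
  show "span1 (\<lambda>i. c * v i) \<subseteq> span1 v"
  proof
    fix x assume "x \<in> span1 (\<lambda>i. c * v i)"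
    then obtain d where "x = (\<lambda>i. d * (c * v i))" unfolding span1_def by auto
    hence "x = (\<lambda>i. (d * c) * v i)" by (simp add: mult.assoc)
    thus "x \<in> span1 v" unfolding span1_def by blast
  qed
  show "span1 v \<subseteq> span1 (\<lambda>i. c * v i)"
  proof
    fix x assume "x \<in> span1 v"
    then obtain d where "x = (\<lambda>i. d * v i)" unfolding span1_def by auto
    hence "x = (\<lambda>i. (d / c) * (c * v i))" using assms by (auto simp: fun_eq_iff)
    thus "x \<in> span1 (\<lambda>i. c * v i)" unfolding span1_def by blast
  qed
qed

lemma span2_comb: "x \<in> span2 u w \<Longrightarrow> y \<in> span2 u w \<Longrightarrow> (\<lambda>i. c * x i + d * y i) \<in> span2 u w"
proof -
  assume "x \<in> span2 u w" "y \<in> span2 u w"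
  then obtain a b a' b' where x: "\<forall>i. x i = a * u i + b * w i" and y: "\<forall>i. y i = a' * u i + b' * w i"
    by (auto simp: mem_span2)
  have "\<forall>i. c * x i + d * y i = (c*a + d*a') * u i + (c*b + d*b') * w i"
    using x y by (simp add: algebra_simps)
  thus ?thesis by (auto simp: mem_span2)
qed

lemma span2_sub: "u' \<in> span2 u w \<Longrightarrow> w' \<in> span2 u w \<Longrightarrow> span2 u' w' \<subseteq> span2 u w"
proof
  fix x assume h: "u' \<in> span2 u w" "w' \<in> span2 u w" "x \<in> span2 u' w'"
  then obtain a b where "\<forall>i. x i = a * u' i + b * w' i" by (auto simp: mem_span2)
  hence "x = (\<lambda>i. a * u' i + b * w' i)" by auto
  thus "x \<in> span2 u w" using span2_comb[OF h(1,2)] by simp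
qed

lemma span2_gen1: "u \<in> span2 u w" unfolding mem_span2 by (rule exI[of _ 1], rule exI[of _ 0]) simp
lemma span2_gen2: "w \<in> span2 u w" unfolding mem_span2 by (rule exI[of _ 0], rule exI[of _ 1]) simp

lemma iso_span:
  assumes "symp u u = 0" "symp u w = 0" "symp w w = 0" "x \<in> span2 u w" "y \<in> span2 u w"
  shows "symp x y = (0::'a::field)"
proof -
  obtain a b a' b' where x: "\<forall>i. x i = a * u i + b * w i" and y: "\<forall>i. y i = a' * u i + b' * w i"
    using assms(4,5) by (auto simp: mem_span2)
  have "symp x y = a*a'*symp u u + a*b'*symp u w - b*a'*symp u w + b*b'*symp w w"
    unfolding symp_def using x y by (simp add: algebra_simps)
  thus ?thesis using assms by simp
qed


lemma Vec_scale: "v \<in> Vec \<Longrightarrow> (\<lambda>i. c * v i) \<in> Vec" unfolding Vec_def by simp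

lemma span2_scale: "x \<in> span2 u w \<Longrightarrow> (\<lambda>i. c * x i) \<in> span2 u w"
  using span2_comb[of x u w x c 0] by simp

lemma Vec_all: assumes "v \<in> Vec" "P 0" "P 1" "P 2" "P 3" "\<And>i. v i = 0 \<Longrightarrow> i \<ge> 4 \<Longrightarrow> P i"
  shows "P i"
proof (cases "i < 4")
  case True
  hence "i = 0 \<or> i = 1 \<or> i = 2 \<or> i = 3" by auto
  thus ?thesis using assms by auto
next
  case False thus ?thesis using assms unfolding Vec_def by auto
qed

lemma classify:
  fixes \<alpha> :: "'a::{field,finite}"
  assumes c2: "(2::'a) = 0" and l: "l \<in> Lns" and ne: "l \<noteq> l0" and r: "vec4 \<alpha> 1 0 0 \<in> l"
  shows "\<exists>\<beta>. l = Mf \<alpha> \<beta>"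
proof -
  obtain u w where lu: "l = span2 u w" and uV: "u \<in> Vec" and wV: "w \<in> Vec" and ind: "lin_indep2 u w"
    and s1: "symp u u = 0" and s2: "symp u w = 0" and s3: "symp w w = 0"
    using l unfolding Lns_def by blast
  have indI: "\<And>a b. (\<forall>i. a * u i + b * w i = 0) \<Longrightarrow> a = 0 \<and> b = 0"
    using ind unfolding lin_indep2_def by blast
  have ex: "\<exists>w'. w' \<in> l \<and> w' \<in> Vec \<and> (w' 2 \<noteq> 0 \<or> w' 3 \<noteq> 0)"
  proof (rule ccontr)
    assume nex: "\<not> ?thesis"
    have u23: "u 2 = 0" "u 3 = 0" using nex span2_gen1[of u w] uV lu by blast+
    have w23: "w 2 = 0" "w 3 = 0" using nex span2_gen2[of w u] wV lu by blast+
    have uz: "\<And>i. i \<ge> 4 \<Longrightarrow> u i = 0" using uV unfolding Vec_def by auto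
    have wz: "\<And>i. i \<ge> 4 \<Longrightarrow> w i = 0" using wV unfolding Vec_def by auto
    define D where "D = u 0 * w 1 - u 1 * w 0"
    have D: "D \<noteq> 0"
    proof
      assume D0: "D = 0"
      show False
      proof (cases "w 1 = 0 \<and> u 1 = 0")
        case True
        have "\<forall>i. w 0 * u i + (- u 0) * w i = 0"
        proof
          fix i show "w 0 * u i + (- u 0) * w i = 0"
            by (rule Vec_all[OF uV]) (use True u23 w23 uz wz in auto)
        qed
        hence "w 0 = 0 \<and> - u 0 = 0" by (rule indI)
        hence "\<forall>i. 1 * u i + 0 * w i = 0"
          using True u23 uz by (auto intro: Vec_all[OF uV])
        from indI[OF this] show False by simp
      next
        case False
        have "\<forall>i. w 1 * u i + (- u 1) * w i = 0"
        proof
          fix i show "w 1 * u i + (- u 1) * w i = 0"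
            by (rule Vec_all[OF uV]) (use D0 u23 w23 uz wz in \<open>auto simp: D_def algebra_simps\<close>)
        qed
        hence "w 1 = 0 \<and> - u 1 = 0" by (rule indI)
        thus False using False by simp
      qed
    qed
    have e0: "ebas 0 \<in> l"
    proof -
      have "\<forall>i. ebas 0 i = (w 1 / D) * u i + (- u 1 / D) * w i"
      proof
        fix i show "ebas 0 i = (w 1 / D) * u i + (- u 1 / D) * w i"
        proof (rule Vec_all[OF uV])
          show "ebas 0 0 = (w 1 / D) * u 0 + (- u 1 / D) * w 0"
          proof -
            have "(w 1 / D) * u 0 + (- u 1 / D) * w 0 = (u 0 * w 1 - u 1 * w 0) / D"
              using D by (simp add: field_simps)
            also have "\<dots> = 1" using D unfolding D_def by simp
            finally show ?thesis by (simp add: ebas_def)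
          qed
        qed (use D u23 w23 uz wz in \<open>auto simp: D_def ebas_def field_simps\<close>)
      qed
      thus ?thesis unfolding lu mem_span2 by blast
    qed
    have e1: "ebas 1 \<in> l"
    proof -
      have "\<forall>i. ebas 1 i = (- w 0 / D) * u i + (u 0 / D) * w i"
      proof
        fix i show "ebas 1 i = (- w 0 / D) * u i + (u 0 / D) * w i"
        proof (rule Vec_all[OF uV])
          show "ebas 1 1 = (- w 0 / D) * u 1 + (u 0 / D) * w 1"
          proof -
            have "(- w 0 / D) * u 1 + (u 0 / D) * w 1 = (u 0 * w 1 - u 1 * w 0) / D"
              using D by (simp add: field_simps)
            also have "\<dots> = 1" using D unfolding D_def by simp
            finally show ?thesis by (simp add: ebas_def)
          qed
        qed (use D u23 w23 uz wz in \<open>auto simp: D_def ebas_def field_simps\<close>)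
      qed
      thus ?thesis unfolding lu mem_span2 by blast
    qed
    have "l0 \<subseteq> l" unfolding l0_def using e0 e1 lu span2_sub by blast
    moreover have "l \<subseteq> l0"
    proof -
      have "u \<in> l0" "w \<in> l0" using memL0 uV wV u23 w23 by auto
      thus ?thesis unfolding lu l0_def by (rule span2_sub)
    qed
    ultimately show False using ne by blast
  qed
  then obtain w' where w': "w' \<in> l" "w' \<in> Vec" "w' 2 \<noteq> 0 \<or> w' 3 \<noteq> 0" by blast
  have "symp (vec4 \<alpha> 1 0 0) w' = 0" using iso_span[OF s1 s2 s3] r w'(1) lu by simp
  hence "w' 2 + \<alpha> * w' 3 = 0" unfolding symp_def by (simp add: add.commute)
  hence w2: "w' 2 = \<alpha> * w' 3" using eq_iff_add[OF c2] by blast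
  hence w3: "w' 3 \<noteq> 0" using w'(3) by auto
  define \<beta> where "\<beta> = (w' 0 - w' 1 * \<alpha>) / w' 3"
  have RV: "(\<lambda>i. (1 / w' 3) * w' i + (- w' 1 / w' 3) * vec4 \<alpha> 1 0 0 i) \<in> Vec"
    using w'(2) unfolding Vec_def by simp
  have n: "vec4 \<beta> 0 \<alpha> 1 = (\<lambda>i. (1 / w' 3) * w' i + (- w' 1 / w' 3) * vec4 \<alpha> 1 0 0 i)"
    by (rule Vec_eq[OF vec4_Vec RV]) (use w3 w2 in \<open>simp_all add: \<beta>_def field_simps\<close>)
  have nl: "vec4 \<beta> 0 \<alpha> 1 \<in> l" unfolding n lu by (rule span2_comb) (use w'(1) r lu in auto)
  have sub1: "Mf \<alpha> \<beta> \<subseteq> l" unfolding Mf_def lu by (rule span2_sub) (use r nl lu in auto)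
  obtain a1 b1 where ra: "\<forall>i. vec4 \<alpha> 1 0 0 i = a1 * u i + b1 * w i" using r lu by (auto simp: mem_span2)
  obtain a2 b2 where na: "\<forall>i. vec4 \<beta> 0 \<alpha> 1 i = a2 * u i + b2 * w i" using nl lu by (auto simp: mem_span2)
  define D where "D = a1*b2 - a2*b1"
  have "D * (u 1 * w 3 - u 3 * w 1) = (a1*u 1 + b1*w 1)*(a2*u 3 + b2*w 3) - (a1*u 3 + b1*w 3)*(a2*u 1 + b2*w 1)"
    unfolding D_def by (simp add: algebra_simps)
  also have "\<dots> = 1" using ra[rule_format, of 1] ra[rule_format, of 3] na[rule_format, of 1] na[rule_format, of 3]
    by simp
  finally have D: "D \<noteq> 0" by auto
  have uM: "u \<in> Mf \<alpha> \<beta>"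
  proof -
    have "\<forall>i. u i = (b2 / D) * vec4 \<alpha> 1 0 0 i + (- b1 / D) * vec4 \<beta> 0 \<alpha> 1 i"
    proof
      fix i
      have "b2 * vec4 \<alpha> 1 0 0 i - b1 * vec4 \<beta> 0 \<alpha> 1 i = D * u i"
        unfolding ra[rule_format] na[rule_format] D_def by (simp add: algebra_simps)
      thus "u i = (b2 / D) * vec4 \<alpha> 1 0 0 i + (- b1 / D) * vec4 \<beta> 0 \<alpha> 1 i"
        using D by (simp add: field_simps)
    qed
    thus ?thesis unfolding Mf_def mem_span2 by blast
  qed
  have wM: "w \<in> Mf \<alpha> \<beta>"
  proof -
    have "\<forall>i. w i = (- a2 / D) * vec4 \<alpha> 1 0 0 i + (a1 / D) * vec4 \<beta> 0 \<alpha> 1 i"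
    proof
      fix i
      have "a1 * vec4 \<beta> 0 \<alpha> 1 i - a2 * vec4 \<alpha> 1 0 0 i = D * w i"
        unfolding ra[rule_format] na[rule_format] D_def by (simp add: algebra_simps)
      thus "w i = (- a2 / D) * vec4 \<alpha> 1 0 0 i + (a1 / D) * vec4 \<beta> 0 \<alpha> 1 i"
        using D by (simp add: field_simps)
    qed
    thus ?thesis unfolding Mf_def mem_span2 by blast
  qed
  have "l \<subseteq> Mf \<alpha> \<beta>" unfolding lu Mf_def by (rule span2_sub) (use uM wM in \<open>auto simp: Mf_def\<close>)
  thus ?thesis using sub1 by blast
qed


lemma Y_cover:
  fixes Y :: "(nat \<Rightarrow> 'a::{field,finite}) set set"
  assumes c2: "(2::'a) = 0" and Y: "is_Y Y"
  shows "\<exists>\<beta>'. Mf \<alpha> \<beta>' \<in> Y"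
proof -
  have YL: "Y \<subseteq> Lns" and cY: "card Y = card (UNIV :: 'a set)"
    and Yp: "\<forall>l\<in>Y. l \<noteq> l0 \<and> l \<inter> l0 \<in> Pts \<and> l \<inter> l0 \<noteq> p0"
    and inj: "inj_on (\<lambda>l. l \<inter> l0) Y" using Y unfolding is_Y_def by auto
  define Cp where "Cp = (\<lambda>a::'a. span1 (vec4 a 1 0 0))"
  have AB: "(\<lambda>l. l \<inter> l0) ` Y \<subseteq> range Cp"
  proof
    fix p assume "p \<in> (\<lambda>l. l \<inter> l0) ` Y"
    then obtain l where l: "l \<in> Y" "p = l \<inter> l0" by blast
    hence pP: "p \<in> Pts" and pn: "p \<noteq> p0" using Yp by auto
    obtain v where v: "p = span1 v" "v \<in> Vec" "v 0 \<noteq> 0 \<or> v 1 \<noteq> 0 \<or> v 2 \<noteq> 0 \<or> v 3 \<noteq> 0"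
      using pP by (rule Pts_E)
    have "v \<in> l0" using in_span1[of v] v(1) l(2) by blast
    hence v23: "v 2 = 0" "v 3 = 0" using memL0 v(2) by auto
    show "p \<in> range Cp"
    proof (cases "v 1 = 0")
      case True
      hence v0: "v 0 \<noteq> 0" using v(3) v23 by auto
      have ve: "v = (\<lambda>i. v 0 * vec4 1 0 0 0 i)"
        by (rule Vec_eq[OF v(2) Vec_scale[OF vec4_Vec]]) (use True v23 in simp_all)
      have "span1 v = span1 (vec4 1 0 0 0)" by (subst ve) (rule span1_scale[OF v0])
      hence "p = span1 (vec4 1 0 0 0)" using v(1) by simp
      hence "p = p0" unfolding p0_def ebas0 .
      thus ?thesis using pn by simp
    next
      case False
      have ve: "v = (\<lambda>i. v 1 * vec4 (v 0 / v 1) 1 0 0 i)"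
        by (rule Vec_eq[OF v(2) Vec_scale[OF vec4_Vec]]) (use False v23 in simp_all)
      have "span1 v = span1 (vec4 (v 0 / v 1) 1 0 0)" by (subst ve) (rule span1_scale[OF False])
      hence "p = Cp (v 0 / v 1)" using v(1) unfolding Cp_def by simp
      thus ?thesis by simp
    qed
  qed
  have fin: "finite (range Cp)" by simp
  have cA: "card ((\<lambda>l. l \<inter> l0) ` Y) = card (UNIV :: 'a set)" using card_image[OF inj] cY by simp
  have "card (range Cp) \<le> card (UNIV :: 'a set)" by (rule card_image_le) simp
  moreover have "card ((\<lambda>l. l \<inter> l0) ` Y) \<le> card (range Cp)" by (rule card_mono[OF fin AB])
  ultimately have "card ((\<lambda>l. l \<inter> l0) ` Y) = card (range Cp)" using cA by simp
  hence eq: "(\<lambda>l. l \<inter> l0) ` Y = range Cp" by (rule card_subset_eq[OF fin AB])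
  have "Cp \<alpha> \<in> (\<lambda>l. l \<inter> l0) ` Y" unfolding eq by simp
  then obtain y where y: "y \<in> Y" "y \<inter> l0 = Cp \<alpha>" by auto
  have "vec4 \<alpha> 1 0 0 \<in> y" using y(2) in_span1[of "vec4 \<alpha> 1 0 0"] unfolding Cp_def by blast
  moreover have "y \<in> Lns" "y \<noteq> l0" using y(1) YL Yp by auto
  ultimately obtain \<beta> where "y = Mf \<alpha> \<beta>" using classify[OF c2] by blast
  thus ?thesis using y(1) by blast
qed

lemma M_span:
  fixes S :: "(nat \<Rightarrow> 'a::{field,finite}) set set"
  assumes c2: "(2::'a) = 0" and finS: "finite S" and Ls: "\<And>a b c. Lf a b c \<in> S" and Y: "Mf \<alpha> \<beta>' \<in> S"
  shows "in_F2_span (chi (Mf \<alpha> \<beta>)) S"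
proof (cases "\<beta> = \<beta>'")
  case True thus ?thesis using span_single[OF finS Y] by simp
next
  case False
  have sp: "in_F2_span (\<lambda>p. chi (Mf \<alpha> \<beta>') p
      + (\<Sum>z\<in>UNIV. chi (Lf ((\<beta>+\<beta>')*(z + \<alpha>*z^2)) ((\<beta>+\<beta>')*z^2) (\<beta> + \<alpha>^2*(\<beta>+\<beta>')*z^2)) p)
      + (\<Sum>z\<in>UNIV. chi (Lf ((\<beta>+\<beta>')*(z + \<alpha>*z^2)) ((\<beta>+\<beta>')*z^2) (\<beta>' + \<alpha>^2*(\<beta>+\<beta>')*z^2)) p)) S"
    by (intro span_add span_sum span_single) (auto simp: finS Ls Y)
  show ?thesis
  proof (rule span_cong[OF sp])
    fix p :: "(nat \<Rightarrow> 'a) set" assume "p \<in> Pts"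
    then obtain v where v: "p = span1 v" "v \<in> Vec" by (rule Pts_E)
    show "chi (Mf \<alpha> \<beta>) p = chi (Mf \<alpha> \<beta>') p
      + (\<Sum>z\<in>UNIV. chi (Lf ((\<beta>+\<beta>')*(z + \<alpha>*z^2)) ((\<beta>+\<beta>')*z^2) (\<beta> + \<alpha>^2*(\<beta>+\<beta>')*z^2)) p)
      + (\<Sum>z\<in>UNIV. chi (Lf ((\<beta>+\<beta>')*(z + \<alpha>*z^2)) ((\<beta>+\<beta>')*z^2) (\<beta>' + \<alpha>^2*(\<beta>+\<beta>')*z^2)) p)"
      unfolding v(1) by (simp only: chi_Lf[OF v(2)] chi_Mf[OF v(2)]) (rule key_diff[OF c2 False])
  qed
qed

lemma one_span:
  fixes S :: "(nat \<Rightarrow> 'a::{field,finite}) set set"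
  assumes qe: "of_nat (card (UNIV::'a set)) = (0::bit)" and finS: "finite S"
    and Ls: "\<And>a b c. Lf a b c \<in> S" and Xs: "\<And>b. Xf b \<in> S" and Ms: "\<And>a b. in_F2_span (chi (Mf a b)) S"
  shows "in_F2_span (\<lambda>p. 1) S"
proof -
  have sp: "in_F2_span (\<lambda>p. (\<Sum>a\<in>UNIV. \<Sum>c\<in>UNIV. chi (Lf a 0 c) p) + (\<Sum>a\<in>UNIV. chi (Lf a 0 0) p)
     + (\<Sum>b\<in>UNIV. chi (Xf b) p) + chi (Xf 0) p + (\<Sum>s\<in>UNIV. chi (Mf s 0) p)) S"
    by (intro span_add span_sum span_single Ms) (auto simp: finS Ls Xs)
  show ?thesis
  proof (rule span_cong[OF sp])
    fix p :: "(nat \<Rightarrow> 'a) set" assume "p \<in> Pts"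
    then obtain v where v: "p = span1 v" "v \<in> Vec" by (rule Pts_E)
    show "(1::bit) = (\<Sum>a\<in>UNIV. \<Sum>c\<in>UNIV. chi (Lf a 0 c) p) + (\<Sum>a\<in>UNIV. chi (Lf a 0 0) p)
     + (\<Sum>b\<in>UNIV. chi (Xf b) p) + chi (Xf 0) p + (\<Sum>s\<in>UNIV. chi (Mf s 0) p)"
      unfolding v(1) by (simp only: chi_Lf[OF v(2)] chi_Mf[OF v(2)] chi_Xf[OF v(2)]) (rule key_one[OF qe])
  qed
qed

theorem lemma6:
  fixes Y :: "(nat \<Rightarrow> 'a::{field,finite}) set set"
    and t :: nat
  assumes "card (UNIV :: 'a set) = 2 ^ t"
    and "is_Y Y"
  shows "(\<forall>l\<in>Lns - {l0}. in_F2_span (chi l) (X0 \<union> Y \<union> L1))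
       \<and> in_F2_span (\<lambda>p. 1) (X0 \<union> Y \<union> L1)"
proof -
  have c2: "(2::'a) = 0" by (rule char2[OF assms(1)])
  have qe: "of_nat (card (UNIV::'a set)) = (0::bit)" by (rule card_even[OF assms(1)])
  define S where "S = X0 \<union> Y \<union> L1"
  have YL: "Y \<subseteq> Lns" using assms(2) unfolding is_Y_def by auto
  have SL: "S \<subseteq> Lns" unfolding S_def X0_def Xl_def L1_def using YL by auto
  have finS: "finite S" using finite_subset[OF SL finite_Lns] .
  have Ls: "Lf a b c \<in> S" for a b c
  proof -
    have "\<not> (\<exists>p\<in>Pts. p \<subseteq> Lf a b c \<and> p \<subseteq> l0)"
    proof
      assume "\<exists>p\<in>Pts. p \<subseteq> Lf a b c \<and> p \<subseteq> l0"
      then obtain p where p: "p \<in> Pts" "p \<subseteq> Lf a b c" "p \<subseteq> l0" by blast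
      obtain v where v: "p = span1 v" "v \<in> Vec" "v 0 \<noteq> 0 \<or> v 1 \<noteq> 0 \<or> v 2 \<noteq> 0 \<or> v 3 \<noteq> 0"
        using p(1) by (rule Pts_E)
      have "v \<in> Lf a b c" "v \<in> l0" using p v(1) in_span1[of v] by auto
      thus False using memL[OF v(2)] memL0[OF v(2)] v(3) by auto
    qed
    hence "Lf a b c \<in> L1" unfolding L1_def using Lf_Lns by simp
    thus ?thesis unfolding S_def by simp
  qed
  have Xs: "Xf b \<in> S" for b
  proof -
    have "ebas 0 \<in> Xf b" using memX[of "ebas 0" b] by (simp add: ebas0)
    hence "p0 \<subseteq> Xf b" unfolding p0_def Xf_def by (subst span1_sub) (simp add: Xf_def)
    moreover have "Xf b \<noteq> l0"
    proof
      assume "Xf b = l0"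
      moreover have "vec4 0 b 1 0 \<in> Xf b" using memX[of "vec4 0 b 1 0" b] by simp
      ultimately show False using memL0[of "vec4 0 b 1 0"] by simp
    qed
    ultimately have "Xf b \<in> X0" unfolding X0_def Xl_def using Xf_Lns by simp
    thus ?thesis unfolding S_def by simp
  qed
  have Ms: "in_F2_span (chi (Mf a b)) S" for a b
  proof -
    obtain b' where "Mf a b' \<in> Y" using Y_cover[OF c2 assms(2)] by blast
    hence "Mf a b' \<in> S" unfolding S_def by simp
    thus ?thesis by (rule M_span[OF c2 finS Ls])
  qed
  have part1: "\<forall>l\<in>Lns - {l0}. in_F2_span (chi l) S"
  proof
    fix l :: "(nat \<Rightarrow> 'a) set" assume l: "l \<in> Lns - {l0}"
    show "in_F2_span (chi l) S"
    proof (cases "l \<in> S")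
      case True thus ?thesis by (rule span_single[OF finS])
    next
      case False
      hence "l \<notin> L1" unfolding S_def by simp
      then obtain p where p: "p \<in> Pts" "p \<subseteq> l" "p \<subseteq> l0" using l unfolding L1_def by auto
      have np0: "\<not> p0 \<subseteq> l"
      proof
        assume "p0 \<subseteq> l"
        hence "l \<in> X0" using l unfolding X0_def Xl_def by simp
        thus False using False unfolding S_def by simp
      qed
      obtain v where v: "p = span1 v" "v \<in> Vec" "v 0 \<noteq> 0 \<or> v 1 \<noteq> 0 \<or> v 2 \<noteq> 0 \<or> v 3 \<noteq> 0"
        using p(1) by (rule Pts_E)
      have vl: "v \<in> l" "v \<in> l0" using p v(1) in_span1[of v] by auto
      hence v23: "v 2 = 0" "v 3 = 0" using memL0 v(2) by auto
      obtain u w where lu: "l = span2 u w" using l unfolding Lns_def by blast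
      show ?thesis
      proof (cases "v 1 = 0")
        case True
        hence v0: "v 0 \<noteq> 0" using v(3) v23 by auto
        have veq: "vec4 1 0 0 0 = (\<lambda>i. (1 / v 0) * v i)"
          by (rule Vec_eq[OF vec4_Vec Vec_scale[OF v(2)]]) (use True v23 v0 in simp_all)
        have A: "(\<lambda>i. (1 / v 0) * v i) \<in> l" unfolding lu by (rule span2_scale) (use vl(1) lu in simp)
        have "ebas 0 \<in> l" unfolding ebas0 veq by (rule A)
        hence "p0 \<subseteq> l" unfolding p0_def lu using span1_sub by blast
        thus ?thesis using np0 by simp
      next
        case False
        have veq: "vec4 (v 0 / v 1) 1 0 0 = (\<lambda>i. (1 / v 1) * v i)"
          by (rule Vec_eq[OF vec4_Vec Vec_scale[OF v(2)]]) (use False v23 in simp_all)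
        have A: "(\<lambda>i. (1 / v 1) * v i) \<in> l" unfolding lu by (rule span2_scale) (use vl(1) lu in simp)
        have "vec4 (v 0 / v 1) 1 0 0 \<in> l" unfolding veq by (rule A)
        then obtain \<beta> where "l = Mf (v 0 / v 1) \<beta>" using classify[OF c2] l by blast
        thus ?thesis using Ms by simp
      qed
    qed
  qed
  have part2: "in_F2_span (\<lambda>p. 1) S" by (rule one_span[OF qe finS Ls Xs Ms])
  show ?thesis using part1 part2 unfolding S_def by simp
qed

end
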